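(* The sequence $(c_n)_{n\ge1}$ satisfies: (a) $c_{2^m+1}=m$ for every $m\ge0$; (b) $c_n<2^{\lceil\log_2 n\rceil}/3$ for every $n\ge1$; (c) $c_n<n/2$ for every $n\ge1$; (d) for every $m\ge1$ and every $p\in\{1,\dots,2^m-1\}$, $c_{2^m+p}=c_{2^{m+1}-p}$.
   Context: Bifurcating trees: rooted trees in which every internal node has exactly two children; $\mathcal{T}_n$ is the set of isomorphism classes of bifurcating trees with $n$ leaves. For a node $w$, $\kappa_T(w)$ is its number of descendant leaves. The Colless index is $\mathcal{C}(T)=\sum_{v}|\kappa_T(v_1)-\kappa_T(v_2)|$, summed over internal nodes $v$ with children $v_1,v_2$; $c_n=\min\{\mathcal{C}(T):T\in\mathcal{T}_n\}$. *)

theory Defs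
  imports Complex_Main
begin

text \<open>Trees are represented as ordered binary trees; isomorphism classes of bifurcating
  trees correspond to these up to swapping children, and the Colless index is
  invariant under such swaps, so minimizing over representatives equals minimizing
  over isomorphism classes.\<close>

datatype btree = Leaf | Node btree btree

fun kappa :: "btree \<Rightarrow> nat" where
  "kappa Leaf = 1"
| "kappa (Node l r) = kappa l + kappa r"

fun colless :: "btree \<Rightarrow> nat" where
  "colless Leaf = 0"
| "colless (Node l r) = colless l + colless r + (if kappa l \<ge> kappa r then kappa l - kappa r else kappa r - kappa l)"

definition min_colless :: "nat \<Rightarrow> nat" where
  "min_colless n = Min (colless ` {t. kappa t = n})"

end

theory Submission
  imports Defs
begin

function g :: "nat \<Rightarrow> nat" where
 "g n = (if n \<le> 1 then 0 else if even n then 2 * g (n div 2) else g (n div 2) + g (n div 2 + 1) + 1)"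
  by auto
termination
  by (relation "measure id") (auto elim!: oddE)

declare g.simps[simp del]

lemma g0[simp]: "g 0 = 0" by (simp add: g.simps)
lemma g1[simp]: "g 1 = 0" "g (Suc 0) = 0" by (simp_all add: g.simps)
lemma g_even: "g (2*k) = 2 * g k"
  by (cases "k = 0") (simp_all add: g.simps[of "2*k"])
lemma g_odd: "k \<ge> 1 \<Longrightarrow> g (2*k+1) = g k + g (k+1) + 1"
proof -
  assume "k \<ge> 1"
  moreover have "(2*k+1) div 2 = k" by simp
  ultimately show ?thesis by (subst g.simps) simp
qed

lemma g2[simp]: "g 2 = 0" "g (Suc (Suc 0)) = 0" using g_even[of 1] by (simp_all add: numeral_2_eq_2)

lemma key: "int (g (a+b)) \<le> int (g a) + int (g b) + \<bar>int a - int b\<bar>"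
proof (induction "a+b" arbitrary: a b rule: less_induct)
  case less
  have IH: "\<And>a' b'. a' + b' < a + b \<Longrightarrow> int (g (a'+b')) \<le> int (g a') + int (g b') + \<bar>int a' - int b'\<bar>"
    using less by blast
  have OE: "int (g (a'+b')) \<le> int (g a') + int (g b') + \<bar>int a' - int b'\<bar>"
    if "a' + b' = a + b" "odd a'" "even b'" "b' \<ge> 1" for a' b'
  proof -
    obtain x where x: "a' = 2*x+1" using \<open>odd a'\<close> oddE by blast
    obtain y where y: "b' = 2*y" using \<open>even b'\<close> by blast
    have y1: "y \<ge> 1" using that y by simp
    show ?thesis
    proof (cases "x = 0")
      case True
      have e: "a' + b' = 2*y+1" using x y True by simp
      have "int (g (y+1)) \<le> int (g y) + int (g 1) + \<bar>int y - int 1\<bar>"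
        using IH[of y 1] that y1 y x by simp
      then show ?thesis using e g_odd[OF y1] g_even[of y] x y True y1 by simp
    next
      case False
      have e: "a' + b' = 2*(x+y)+1" using x y by simp
      have i1: "int (g (x+y)) \<le> int (g x) + int (g y) + \<bar>int x - int y\<bar>"
        using IH[of x y] that x y by simp
      have i2: "int (g (x+1+y)) \<le> int (g (x+1)) + int (g y) + \<bar>int (x+1) - int y\<bar>"
        using IH[of "x+1" y] that x y y1 by simp
      have "x+1+y = x+y+1" by simp
      then show ?thesis using e g_odd[of "x+y"] g_odd[of x] False y1 i1 i2 g_even[of y] x y
        by (simp add: abs_if split: if_splits) 
    qed
  qed
  show ?case
  proof (cases "a = 0 \<or> b = 0")
    case True
    then show ?thesis by auto
  next
    case False
    show ?thesis
    proof (cases "even a")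
      case ea: True
      show ?thesis
      proof (cases "even b")
        case True
        obtain x where x: "a = 2*x" using ea by blast
        obtain y where y: "b = 2*y" using True by blast
        have "int (g (x+y)) \<le> int (g x) + int (g y) + \<bar>int x - int y\<bar>"
          using IH[of x y] x y False by simp
        moreover have "a + b = 2*(x+y)" using x y by simp
        moreover have "\<bar>int a - int b\<bar> = 2*\<bar>int x - int y\<bar>" using x y by (simp add: abs_if)
        ultimately show ?thesis using g_even[of "x+y"] g_even[of x] g_even[of y] x y
          by simp
      next
        case False
        have "int (g (b+a)) \<le> int (g b) + int (g a) + \<bar>int b - int a\<bar>"
          using OE[of b a] False ea \<open>\<not>(a = 0 \<or> b = 0)\<close> by simp
        then show ?thesis by (simp add: add.commute abs_minus_commute)
      qed
    next
      case oa: False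
      show ?thesis
      proof (cases "even b")
        case True
        then show ?thesis using OE[of a b] oa False by simp
      next
        case ob: False
        obtain x where x: "a = 2*x+1" using oa oddE by blast
        obtain y where y: "b = 2*y+1" using ob oddE by blast
        have e: "a + b = 2*(x+y+1)" using x y by simp
        show ?thesis
        proof (cases "x = 0 \<or> y = 0")
          case True
          then consider "x = 0" "y = 0" | "x = 0" "y \<ge> 1" | "y = 0" "x \<ge> 1" by linarith
          then show ?thesis
          proof cases
            case 1
            then show ?thesis using x y g_even[of 1] by simp
          next
            case 2
            have "int (g (y+1)) \<le> int (g y) + int (g 1) + \<bar>int y - int 1\<bar>"
              using IH[of y 1] x y 2 by simp
            then show ?thesis using e g_even[of "x+y+1"] g_odd[of y] 2 x y by simp
          next
            case 3
            have "int (g (x+1)) \<le> int (g x) + int (g 1) + \<bar>int x - int 1\<bar>"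
              using IH[of x 1] x y 3 by simp
            then show ?thesis using e g_even[of "x+y+1"] g_odd[of x] 3 x y by simp
          qed
        next
          case False
          have i1: "int (g (x+(y+1))) \<le> int (g x) + int (g (y+1)) + \<bar>int x - int (y+1)\<bar>"
            using IH[of x "y+1"] x y by simp
          have i2: "int (g ((x+1)+y)) \<le> int (g (x+1)) + int (g y) + \<bar>int (x+1) - int y\<bar>"
            using IH[of "x+1" y] x y by simp
          have "x+(y+1) = x+y+1" "(x+1)+y = x+y+1" by simp_all
          then show ?thesis using e g_even[of "x+y+1"] g_odd[of x] g_odd[of y] False x y i1 i2
            by (simp add: abs_if split: if_splits)
        qed
      qed
    qed
  qed
qed


lemma kappa_pos: "kappa t \<ge> 1"
  by (induction t) auto

lemma colless_ge: "g (kappa t) \<le> colless t"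
proof (induction t)
  case Leaf then show ?case by simp
next
  case (Node l r)
  have "int (g (kappa l + kappa r)) \<le> int (g (kappa l)) + int (g (kappa r)) + \<bar>int (kappa l) - int (kappa r)\<bar>"
    by (rule key)
  then show ?case using Node by (auto simp: abs_if split: if_splits)
qed

lemma colless_le: "colless t \<le> kappa t * kappa t"
proof (induction t)
  case Leaf then show ?case by simp
next
  case (Node l r)
  have a: "kappa l \<ge> 1" "kappa r \<ge> 1" by (rule kappa_pos)+
  have h: "kappa l \<le> kappa l * kappa r" "kappa r \<le> kappa l * kappa r" using a by simp_all
  have "kappa l - kappa r \<le> kappa l * kappa r" "kappa r - kappa l \<le> kappa l * kappa r"
    using h by linarith+
  then have d: "(if kappa l \<ge> kappa r then kappa l - kappa r else kappa r - kappa l) \<le> 2 * (kappa l * kappa r)"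
    by auto
  have "colless (Node l r) = colless l + colless r + (if kappa l \<ge> kappa r then kappa l - kappa r else kappa r - kappa l)"
    by simp
  then have "colless (Node l r) \<le> kappa l * kappa l + kappa r * kappa r + 2 * (kappa l * kappa r)"
    using Node d by linarith
  also have "\<dots> = kappa (Node l r) * kappa (Node l r)" by (simp add: algebra_simps)
  finally show ?case .
qed

function bal :: "nat \<Rightarrow> btree" where
  "bal n = (if n \<le> 1 then Leaf else Node (bal (n - n div 2)) (bal (n div 2)))"
  by auto
termination by (relation "measure id") auto

declare bal.simps[simp del]

lemma g_split: "n \<ge> 2 \<Longrightarrow> g n = g (n - n div 2) + g (n div 2) + (n - n div 2 - n div 2)"
proof -
  assume n: "n \<ge> 2"
  show ?thesis
  proof (cases "even n")
    case True
    then obtain k where k: "n = 2*k" by blast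
    have "n div 2 = k" "n - n div 2 = k" using k by simp_all
    then show ?thesis using g_even[of k] k by simp
  next
    case False
    then obtain k where k: "n = 2*k+1" using oddE by blast
    then have k1: "k \<ge> 1" using n by simp
    have "n div 2 = k" "n - n div 2 = k+1" using k by simp_all
    then show ?thesis using g_odd[OF k1] k by simp
  qed
qed

lemma bal_props: "n \<ge> 1 \<Longrightarrow> kappa (bal n) = n \<and> colless (bal n) = g n"
proof (induction n rule: less_induct)
  case (less n)
  show ?case
  proof (cases "n \<le> 1")
    case True
    then have "n = 1" using less.prems by simp
    have "bal 1 = Leaf" by (subst bal.simps) simp
    then show ?thesis using \<open>n = 1\<close> by simp
  next
    case False
    have i1: "kappa (bal (n - n div 2)) = n - n div 2 \<and> colless (bal (n - n div 2)) = g (n - n div 2)"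
      using less.IH[of "n - n div 2"] False by simp
    have i2: "kappa (bal (n div 2)) = n div 2 \<and> colless (bal (n div 2)) = g (n div 2)"
      using less.IH[of "n div 2"] False by simp
    have eq: "bal n = Node (bal (n - n div 2)) (bal (n div 2))" using False by (subst bal.simps) simp
    have k: "kappa (bal n) = n" unfolding eq using i1 i2 by simp
    have c: "colless (bal n) = g (n - n div 2) + g (n div 2) + (n - n div 2 - n div 2)"
      unfolding eq using i1 i2 by (simp; linarith)
    show ?thesis using k c g_split[of n] False by simp
  qed
qed

lemma min_colless_eq: "n \<ge> 1 \<Longrightarrow> min_colless n = g n"
proof -
  assume n: "n \<ge> 1"
  have fin: "finite (colless ` {t. kappa t = n})"
  proof (rule finite_subset)
    show "colless ` {t. kappa t = n} \<subseteq> {..n*n}" using colless_le by fastforce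
  qed simp
  show ?thesis unfolding min_colless_def
  proof (rule Min_eqI[OF fin])
    show "\<And>y. y \<in> colless ` {t. kappa t = n} \<Longrightarrow> g n \<le> y" using colless_ge by auto
    show "g n \<in> colless ` {t. kappa t = n}" using bal_props[OF n] by force
  qed
qed

lemma g_pow2: "g (2^m) = 0"
  by (induction m) (simp_all add: g_even)

lemma g_a: "g (2^m + 1) = m"
proof (induction m)
  case 0 then show ?case by simp
next
  case (Suc m)
  have "g (2*2^m + 1) = g (2^m) + g (2^m+1) + 1" by (rule g_odd) simp
  then show ?case using Suc g_pow2[of m] by simp
qed

lemma g_c: "(n \<ge> 1 \<longrightarrow> 2 * g n + 1 \<le> n) \<and> (even n \<and> n \<ge> 2 \<longrightarrow> 2 * g n + 2 \<le> n)"
proof (induction n rule: less_induct)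
  case (less n)
  show ?case
  proof (cases "n \<le> 1")
    case True then show ?thesis by (cases n) auto
  next
    case False
    show ?thesis
    proof (cases "even n")
      case True
      then obtain k where k: "n = 2*k" by blast
      have "2 * g k + 1 \<le> k" using less.IH[of k] k False by simp
      then show ?thesis using g_even[of k] k True by simp
    next
      case ne: False
      then obtain k where k: "n = 2*k+1" using oddE by blast
      have k1: "k \<ge> 1" using k False by simp
      have a: "2 * g k + 1 \<le> k" "2 * g (k+1) + 1 \<le> k+1" using less.IH[of k] less.IH[of "k+1"] k k1 by simp_all
      have b: "2 * g k + 2 \<le> k" if "even k"
      proof -
        have "k \<ge> 2" using that k1 by (cases "k = 1") auto
        then show ?thesis using less.IH[of k] k that by simp
      qed
      have c: "2 * g (k+1) + 2 \<le> k+1" if "even (k+1)"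
      proof -
        have "k+1 \<ge> 2" using k1 by simp
        then show ?thesis using less.IH[of "k+1"] k that by simp
      qed
      have "2 * g n + 1 \<le> n"
      proof (cases "even k")
        case True then show ?thesis using a b g_odd[OF k1] k by simp
      next
        case False then show ?thesis using a c g_odd[OF k1] k by simp
      qed
      then show ?thesis using ne by simp
    qed
  qed
qed

lemma pow2_mod3': "(2::nat)^m mod 3 = 1 \<or> (2::nat)^m mod 3 = 2"
proof (induction m)
  case 0 then show ?case by simp
next
  case (Suc m)
  have "(2::nat)^Suc m mod 3 = (2 * (2^m mod 3)) mod 3" by (simp add: mod_mult_right_eq)
  then show ?case using Suc by auto
qed

lemma pow2_mod3: "(2::nat)^m mod 3 \<noteq> 0"
  using pow2_mod3'[of m] by auto

lemma arith3:
  fixes A :: nat assumes "A mod 3 \<noteq> 0"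
  shows "2 * ((A - 1) div 3) + (2*A - 1) div 3 + 1 \<le> (4*A - 1) div 3"
    and "2 * ((A - 1) div 3) \<le> (2 * A - 1) div 3"
proof -
  have "A mod 3 = 1 \<or> A mod 3 = 2" using assms by linarith
  then obtain t r where tr: "A = 3*t + r" "r = 1 \<or> r = 2"
    by (metis div_mult_mod_eq mult.commute)
  show "2 * ((A - 1) div 3) + (2*A - 1) div 3 + 1 \<le> (4*A - 1) div 3"
    using tr(2)
  proof
    assume "r = 1"
    then have "A - 1 = 3*t" "2*A - 1 = 3*(2*t) + 1" "4*A - 1 = 3*(4*t+1)" using tr(1) by simp_all
    then show ?thesis by simp
  next
    assume "r = 2"
    then have e: "A - 1 = 3*t + 1" "2*A - 1 = 3*(2*t+1)" "4*A - 1 = 3*(4*t+2) + 1" using tr(1) by simp_all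
    have "(3*t+1) div 3 = t" "(3*(4*t+2)+1) div 3 = 4*t+2" by simp_all
    then show ?thesis unfolding e by simp
  qed
  show "2 * ((A - 1) div 3) \<le> (2 * A - 1) div 3"
    using tr(2)
  proof
    assume "r = 1"
    then have "A - 1 = 3*t" "2*A - 1 = 3*(2*t) + 1" using tr(1) by simp_all
    then show ?thesis by simp
  next
    assume "r = 2"
    then have "A - 1 = 3*t + 1" "2*A - 1 = 3*(2*t+1)" using tr(1) by simp_all
    then show ?thesis by simp
  qed
qed

lemma g_b: "1 \<le> n \<Longrightarrow> n \<le> 2^m \<Longrightarrow> g n \<le> (2^m - 1) div 3"
proof (induction m arbitrary: n rule: less_induct)
  case (less m)
  show ?case
  proof (cases "m = 0 \<or> n \<le> 2")
    case True
    then have "n \<le> 2" using less.prems by auto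
    then have "g n = 0" using less.prems by (cases "n = 1") (auto simp: numeral_2_eq_2 le_Suc_eq)
    then show ?thesis by simp
  next
    case False
    then obtain m1 where m1: "m = Suc m1" by (cases m) auto
    have P: "(2::nat)^m = 2 * 2^m1" using m1 by simp
    show ?thesis
    proof (cases "even n")
      case True
      then obtain k where k: "n = 2*k" by blast
      have "g k \<le> (2^m1 - 1) div 3" using less.IH[of m1 k] m1 k less.prems P by simp
      moreover have "2 * ((2^m1 - 1) div 3) \<le> (2 * 2^m1 - 1) div (3::nat)"
        using arith3(2)[OF pow2_mod3[of m1]] .
      ultimately show ?thesis using g_even[of k] k P by simp
    next
      case ne: False
      then obtain k where k: "n = 2*k+1" using oddE by blast
      have k1: "k \<ge> 1" using k False by simp
      have m1p: "m1 \<ge> 1" using False m1 k less.prems by (cases m1) auto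
      then obtain m2 where m2: "m1 = Suc m2" by (cases m1) auto
      have P2: "(2::nat)^m1 = 2 * 2^m2" using m2 by simp
      have kk: "k + 1 \<le> 2^m1" using k less.prems P by simp
      have ik: "g k \<le> (2^m1 - 1) div 3" using less.IH[of m1 k] m1 k1 kk by simp
      have ik1: "g (k+1) \<le> (2^m1 - 1) div 3" using less.IH[of m1 "k+1"] m1 kk by simp
      have ev: "g j \<le> 2 * ((2^m2 - 1) div 3)" if hj: "even j" "j \<ge> 1" "j \<le> 2^m1" for j
      proof -
        obtain i where i: "j = 2*i" using hj(1) by blast
        have "g i \<le> (2^m2 - 1) div 3" using less.IH[of m2 i] m1 m2 i hj P2 by simp
        then show ?thesis using g_even[of i] i by simp
      qed
      define A where "A = (2::nat)^m2"
      have A: "A mod 3 \<noteq> 0" using pow2_mod3[of m2] A_def by simp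
      have arith: "2 * ((A - 1) div 3) + (2*A - 1) div 3 + 1 \<le> (4*A - 1) div (3::nat)"
        using arith3(1)[OF A] .
      have evk: "g j \<le> 2 * ((A - 1) div 3)" if "even j" "j \<ge> 1" "j \<le> 2^m1" for j
        using ev[OF that] A_def by simp
      have ikA: "g k \<le> (2*A - 1) div 3" "g (k+1) \<le> (2*A - 1) div 3"
        using ik ik1 P2 A_def by simp_all
      have "g k + g (k+1) \<le> 2 * ((A - 1) div 3) + (2*A - 1) div 3"
      proof (cases "even k")
        case True
        have "g k \<le> 2 * ((A - 1) div 3)" using evk[of k] True k1 kk by linarith
        then show ?thesis using ikA by linarith
      next
        case False
        have "g (k+1) \<le> 2 * ((A - 1) div 3)" using evk[of "k+1"] False kk by simp
        then show ?thesis using ikA by linarith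
      qed
      moreover have "(2::nat)^m = 4 * A" using P P2 A_def by simp
      moreover have "g n = g k + g (k+1) + 1" using g_odd[OF k1] k by simp
      ultimately show ?thesis using arith by simp
    qed
  qed
qed

lemma g_d: "p \<le> 2^m \<Longrightarrow> g (2^m + p) = g (2^(m+1) - p)"
proof (induction m arbitrary: p)
  case 0
  then have "p = 0 \<or> p = 1" by auto
  then show ?case by auto
next
  case (Suc m)
  show ?case
  proof (cases "even p")
    case True
    then obtain q where q: "p = 2*q" by blast
    have "q \<le> 2^m" using Suc.prems q by simp
    then have "g (2^m + q) = g (2^(m+1) - q)" by (rule Suc.IH)
    moreover have "2^Suc m + p = 2*(2^m+q)" using q by simp
    moreover have "2^(Suc m + 1) - p = 2*(2^(m+1) - q)" using q by (simp add: algebra_simps)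
    ultimately show ?thesis using g_even by metis
  next
    case False
    then obtain q where q: "p = 2*q+1" using oddE by blast
    have q1: "q + 1 \<le> 2^m" using Suc.prems q by simp
    have e1: "g (2^m + q) = g (2^(m+1) - q)" using Suc.IH q1 by simp
    have e2: "g (2^m + (q+1)) = g (2^(m+1) - (q+1))" using Suc.IH q1 by blast
    have n1: "2^Suc m + p = 2*(2^m+q)+1" using q by simp
    have n2: "2^(Suc m + 1) - p = 2*(2^(m+1) - (q+1))+1" using q q1 by (simp add: algebra_simps)
    have h1: "2^m + q \<ge> 1" by (simp add: add_increasing2)
    have h2: "2^(m+1) - (q+1) \<ge> 1" using q1 by simp
    have "2^(m+1) - (q+1) + 1 = 2^(m+1) - q" using q1 by simp
    then show ?thesis using n1 n2 g_odd[OF h1] g_odd[OF h2] e1 e2 by (simp add: add.assoc)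
  qed
qed

lemma ceil_pow: "(n::nat) \<ge> 1 \<Longrightarrow> n \<le> 2 ^ nat \<lceil>log 2 (real n)\<rceil>"
proof -
  assume n: "n \<ge> 1"
  have "log 2 (real n) \<ge> 0" using n by simp
  then have c0: "\<lceil>log 2 (real n)\<rceil> \<ge> 0" by simp
  have "real n = 2 powr (log 2 (real n))" using n by simp
  also have "\<dots> \<le> 2 powr (real_of_int \<lceil>log 2 (real n)\<rceil>)" by simp
  also have "\<dots> = 2 powr (real (nat \<lceil>log 2 (real n)\<rceil>))" using c0 by simp
  also have "\<dots> = 2 ^ nat \<lceil>log 2 (real n)\<rceil>" by (simp add: powr_realpow)
  finally have "real n \<le> real (2 ^ nat \<lceil>log 2 (real n)\<rceil>)" by simp
  then show ?thesis by linarith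
qed

theorem corollary5:
  shows "(\<forall>m::nat. min_colless (2 ^ m + 1) = m)
    \<and> (\<forall>n::nat. n \<ge> 1 \<longrightarrow> real (min_colless n) < (2::real) ^ nat \<lceil>log 2 (real n)\<rceil> / 3)
    \<and> (\<forall>n::nat. n \<ge> 1 \<longrightarrow> real (min_colless n) < real n / 2)
    \<and> (\<forall>m p :: nat. m \<ge> 1 \<longrightarrow> 1 \<le> p \<longrightarrow> p \<le> 2 ^ m - 1 \<longrightarrow>
         min_colless (2 ^ m + p) = min_colless (2 ^ (m + 1) - p))"
proof (intro conjI allI impI)
  fix m :: nat
  show "min_colless (2 ^ m + 1) = m" using min_colless_eq[of "2^m+1"] g_a by simp
next
  fix n :: nat assume n: "n \<ge> 1"
  define M where "M = nat \<lceil>log 2 (real n)\<rceil>"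
  have "g n \<le> (2^M - 1) div 3" using g_b[OF n ceil_pow[OF n]] M_def by simp
  moreover have "3 * ((2^M - 1) div 3) \<le> (2::nat)^M - 1" by simp
  moreover have "(2::nat)^M \<ge> 1" by simp
  ultimately have "3 * g n < 2^M" by linarith
  then have "real (3 * g n) < real ((2::nat)^M)" by linarith
  then show "real (min_colless n) < (2::real) ^ nat \<lceil>log 2 (real n)\<rceil> / 3"
    using min_colless_eq[OF n] M_def by simp
next
  fix n :: nat assume n: "n \<ge> 1"
  have "2 * g n + 1 \<le> n" using g_c[of n] n by simp
  then show "real (min_colless n) < real n / 2" using min_colless_eq[OF n] by simp
next
  fix m p :: nat assume m: "m \<ge> 1" and p: "1 \<le> p" "p \<le> 2 ^ m - 1"
  have a: "2^m + p \<ge> 1" using p by simp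
  have b: "2^(m+1) - p \<ge> 1" using p by simp
  show "min_colless (2 ^ m + p) = min_colless (2 ^ (m + 1) - p)"
    using min_colless_eq[OF a] min_colless_eq[OF b] g_d[of p m] p by simp
qed

end
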